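(* Let $\kappa$ be a regular infinite cardinal and let $\langle W^\kappa,(T_i)_{i\in\{a,b\}},\theta\rangle$ be the $*$-type space described in the context. Let $\alpha\le\kappa$ and $w^\kappa,u^\kappa\in W^\kappa$ with $w^\kappa\upharpoonright\alpha=u^\kappa\upharpoonright\alpha$. Then for every $\kappa$-expression $\varphi$ with $\mathrm{dp}(\varphi)\le\alpha$: $w^\kappa\in\varphi^{W^\kappa}$ iff $u^\kappa\in\varphi^{W^\kappa}$.
   Context: Records: for $\alpha\ge1$, a record of length $\alpha$ is $r=(r(\beta))_{\beta<\alpha}\in\{0,1\}^\alpha$ such that for every limit $\lambda\le\alpha$ there is $\gamma<\lambda$ with $r(\beta)=0$ for $\gamma\le\beta<\lambda$. Parity: finite ordinals usual (0 even); infinite $\hat\lambda+n$ ($\hat\lambda$ limit) has the parity of $n$. For limit $\lambda\le\alpha$, $o^\lambda(r)$ is the least ordinal $<\lambda$ after which $r$ is $0$ below $\lambda$; $\lambda\text{-par}(r)$ is its parity. $W^0=\{h,t\}$, $W^\alpha$ ($\alpha\ge1$) = triples $(w_0,w_a^\alpha,w_b^\alpha)$ with $w_0\in\{h,t\}$, $w_a^\alpha,w_b^\alpha$ records of length $\alpha$; $w^\alpha\upharpoonright\beta$ restricts both records to $\beta$ (and $w^\alpha\upharpoonright 0=w_0$); $\pi_{\beta,\alpha}(w^\alpha)=w^\alpha\upharpoonright\beta$. For $i\in\{a,b\}$, $j$ the other player, $P_i(w^\alpha)$ is the set of $v^\alpha\in W^\alpha$ with $v_i^\alpha=w_i^\alpha$;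 $w_i^\alpha(0)=1\Rightarrow v_0=w_0$; $w_i^\alpha(\beta+1)=1\Rightarrow v_j^\alpha(\beta)=w_j^\alpha(\beta)$ for $\beta+1<\alpha$; $w_i^\alpha(\lambda)=1\Rightarrow\lambda\text{-par}(v_j^\alpha)=\lambda\text{-par}(w_j^\alpha)$ for limit $\lambda<\alpha$. $T_a,T_b:W^\kappa\to\{$finitely additive probability measures on $\mathrm{Pow}(W^\kappa)\}$ are functions (which exist) satisfying for all $w^\kappa$: (a) $T_i$ constant on $P_i(w^\kappa)$; (b) $T_i(w^\kappa)(P_i(w^\kappa))=1$; (c) $T_i(w^\kappa)(\{u:u_0=w_0\})=1$ if $w_i^\kappa(0)=1$, $=\frac12$ otherwise; (d) for $\beta<\kappa$, $T_i(w^\kappa)(\{u:u_j^\kappa(\beta)=w_j^\kappa(\beta)\})=1$ if $w_i^\kappa(\beta+1)=1$, $=\frac12$ otherwise; (e) for limit $\lambda<\kappa$, $T_i(w^\kappa)(\{u:\lambda\text{-par}(u_j^\kappa)=\lambda\text{-par}(w_j^\kappa)\})=1$ if $w_i^\kappa(\lambda)=1$, $=\frac12$ otherwise; (f) for $0\le\beta<\alpha<\kappa$, $E^\beta\subseteq W^\beta$, $u^\kappa\upharpoonright\alpha=w^\kappa\upharpoonright\alpha$ implies $T_i(u^\kappa)(\pi^{-1}_{\beta,\kappa}(E^\beta))=T_i(w^\kappa)(\pi^{-1}_{\beta,\kappa}(E^\beta))$. $\theta(w^\kappa)=w_0$. This is a $*$-type space on $S=\{h,t\}$ for players $\{a,b\}$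 (all subsets measurable). $\kappa$-expressions over $\Sigma_S=\mathrm{Pow}(\{h,t\})$, $I=\{a,b\}$: least set containing each $E\subseteq\{h,t\}$ and closed under $\neg$, $B_i^p$ ($p\in[0,1]$), and conjunctions of fewer than $\kappa$ (nonempty) expressions. Semantics: $E^{W^\kappa}=\theta^{-1}(E)$, complement, $(B_i^p\varphi)^{W^\kappa}=\{w:T_i(w)(\varphi^{W^\kappa})\ge p\}$, intersection. Depth: $\mathrm{dp}(E)=0$, $\mathrm{dp}(\neg\varphi)=\mathrm{dp}(\varphi)$, $\mathrm{dp}(B_i^p\varphi)=\mathrm{dp}(\varphi)+1$, $\mathrm{dp}(\bigwedge_{\varphi\in\Psi}\varphi)=\sup_{\varphi\in\Psi}\mathrm{dp}(\varphi)$. *)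

theory Defs
  imports Complex_Main
begin

text \<open>The ordinals below kappa are the elements of a well-ordered type 'k whose
  order relation is an (initial-ordinal) cardinal order; kappa itself is the
  order type of 'k. Ordinals alpha \<le> kappa are encoded as 'k option, with None = kappa.\<close>

definition ordrel :: "('k::wellorder) rel" where
  "ordrel = {(x, y). x \<le> y}"

definition ozero :: "'k::wellorder" where
  "ozero = (LEAST x. True)"

definition osucc :: "'k::wellorder \<Rightarrow> 'k" where
  "osucc b = (LEAST g. b < g)"

definition is_limit :: "'k::wellorder \<Rightarrow> bool" where
  "is_limit l \<longleftrightarrow> l \<noteq> ozero \<and> (\<forall>b<l. \<exists>g. b < g \<and> g < l)"

definition olt :: "'k::wellorder \<Rightarrow> 'k option \<Rightarrow> bool" where
  "olt b a = (case a of None \<Rightarrow> True | Some a' \<Rightarrow> b < a')"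

definition ole :: "'k::wellorder option \<Rightarrow> 'k option \<Rightarrow> bool" where
  "ole x y = (case y of None \<Rightarrow> True
              | Some y' \<Rightarrow> (case x of None \<Rightarrow> False | Some x' \<Rightarrow> x' \<le> y'))"

definition osucc_opt :: "'k::wellorder option \<Rightarrow> 'k option" where
  "osucc_opt x = (case x of None \<Rightarrow> None | Some b \<Rightarrow> Some (osucc b))"

definition osup :: "'k::wellorder option set \<Rightarrow> 'k option" where
  "osup S = (if None \<in> S \<or> \<not> (\<exists>g. \<forall>s\<in>S. ole s (Some g)) then None
             else Some (LEAST g. \<forall>s\<in>S. ole s (Some g)))"

inductive plus_n :: "'k::wellorder \<Rightarrow> nat \<Rightarrow> 'k \<Rightarrow> bool" where
  "plus_n l 0 l"
| "plus_n l n b \<Longrightarrow> plus_n l (Suc n) (osucc b)"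

definition ord_even :: "'k::wellorder \<Rightarrow> bool" where
  "ord_even b \<longleftrightarrow> (\<exists>l n. (l = ozero \<or> is_limit l) \<and> plus_n l n b \<and> even n)"

text \<open>A record of length alpha (alpha \<le> kappa) is a function 'k \<Rightarrow> bool (True = 1) that
  vanishes at positions \<ge> alpha, such that for every limit lambda \<le> alpha it is
  eventually 0 below lambda.\<close>
definition eventually_zero_below :: "('k::wellorder \<Rightarrow> bool) \<Rightarrow> 'k option \<Rightarrow> bool" where
  "eventually_zero_below r l \<longleftrightarrow> (\<exists>g. olt g l \<and> (\<forall>b. g \<le> b \<and> olt b l \<longrightarrow> \<not> r b))"

definition is_record :: "'k::wellorder option \<Rightarrow> ('k \<Rightarrow> bool) \<Rightarrow> bool" where
  "is_record a r \<longleftrightarrow> ole (Some ozero) a \<and> a \<noteq> Some ozero \<and>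
     (\<forall>b. \<not> olt b a \<longrightarrow> \<not> r b) \<and>
     (\<forall>l. is_limit l \<and> ole (Some l) a \<longrightarrow> eventually_zero_below r (Some l)) \<and>
     (a = None \<longrightarrow> eventually_zero_below r None)"

definition o_lam :: "'k::wellorder \<Rightarrow> ('k \<Rightarrow> bool) \<Rightarrow> 'k" where
  "o_lam l r = (LEAST g. g < l \<and> (\<forall>b. g \<le> b \<and> b < l \<longrightarrow> \<not> r b))"

definition lam_par :: "'k::wellorder \<Rightarrow> ('k \<Rightarrow> bool) \<Rightarrow> bool" where
  "lam_par l r = ord_even (o_lam l r)"

datatype coin = H | T
datatype player = A | B

fun other :: "player \<Rightarrow> player" where
  "other A = B" | "other B = A"

type_synonym 'k world = "coin \<times> (player \<Rightarrow> 'k \<Rightarrow> bool)"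

definition W :: "'k::wellorder world set" where
  "W = {(c, f). \<forall>i. is_record None (f i)}"

text \<open>Restriction w|alpha; for alpha = 0 only the coin survives (records become all-0).\<close>
definition restr :: "'k::wellorder option \<Rightarrow> 'k world \<Rightarrow> 'k world" where
  "restr a w = (fst w, \<lambda>i b. olt b a \<and> snd w i b)"

text \<open>W^beta for beta < kappa (W^0 is represented by pairs (c, all-zero)).\<close>
definition W_lvl :: "'k::wellorder \<Rightarrow> 'k world set" where
  "W_lvl b = (if b = ozero then {(c, f). \<forall>i x. \<not> f i x}
              else {(c, f). \<forall>i. is_record (Some b) (f i)})"

definition preimg :: "'k::wellorder \<Rightarrow> 'k world set \<Rightarrow> 'k world set" where
  "preimg b E = {v \<in> W. restr (Some b) v \<in> E}"

definition P :: "player \<Rightarrow> 'k::wellorder world \<Rightarrow> 'k world set" where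
  "P i w = {v \<in> W. snd v i = snd w i
     \<and> (snd w i ozero \<longrightarrow> fst v = fst w)
     \<and> (\<forall>b. snd w i (osucc b) \<longrightarrow> snd v (other i) b = snd w (other i) b)
     \<and> (\<forall>l. is_limit l \<and> snd w i l \<longrightarrow>
            lam_par l (snd v (other i)) = lam_par l (snd w (other i)))}"

definition fa_prob :: "'a set \<Rightarrow> ('a set \<Rightarrow> real) \<Rightarrow> bool" where
  "fa_prob X \<mu> \<longleftrightarrow> \<mu> X = 1 \<and> (\<forall>E\<subseteq>X. 0 \<le> \<mu> E)
     \<and> (\<forall>E F. E \<subseteq> X \<and> F \<subseteq> X \<and> E \<inter> F = {} \<longrightarrow> \<mu> (E \<union> F) = \<mu> E + \<mu> F)"

definition type_space :: "(player \<Rightarrow> 'k::wellorder world \<Rightarrow> 'k world set \<Rightarrow> real) \<Rightarrow> bool" where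
  "type_space Tp \<longleftrightarrow> (\<forall>i. \<forall>w\<in>W.
      fa_prob W (Tp i w)
    \<and> (\<forall>v\<in>P i w. Tp i v = Tp i w)
    \<and> Tp i w (P i w) = 1
    \<and> Tp i w {u\<in>W. fst u = fst w} = (if snd w i ozero then 1 else 1/2)
    \<and> (\<forall>b. Tp i w {u\<in>W. snd u (other i) b = snd w (other i) b}
            = (if snd w i (osucc b) then 1 else 1/2))
    \<and> (\<forall>l. is_limit l \<longrightarrow>
          Tp i w {u\<in>W. lam_par l (snd u (other i)) = lam_par l (snd w (other i))}
            = (if snd w i l then 1 else 1/2))
    \<and> (\<forall>b a E u. b < a \<and> E \<subseteq> W_lvl b \<and> u \<in> W \<and> restr (Some a) u = restr (Some a) w
          \<longrightarrow> Tp i u (preimg b E) = Tp i w (preimg b E)))"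

datatype 'k expr = Atom "coin set" | Neg "'k expr" | Bel player real "'k expr"
  | Conj "'k set" "'k \<Rightarrow> 'k expr"

primrec wf_expr :: "('k::wellorder) expr \<Rightarrow> bool" where
  "wf_expr (Atom E) = True"
| "wf_expr (Neg x) = wf_expr x"
| "wf_expr (Bel i p x) = (0 \<le> p \<and> p \<le> 1 \<and> wf_expr x)"
| "wf_expr (Conj J f) = (J \<noteq> {} \<and> (card_of J, card_of (UNIV :: 'k set)) \<in> ordLess \<and> (\<forall>j\<in>J. wf_expr (f j)))"

primrec sem :: "(player \<Rightarrow> 'k::wellorder world \<Rightarrow> 'k world set \<Rightarrow> real) \<Rightarrow> 'k expr \<Rightarrow> 'k world set" where
  "sem Tp (Atom E) = {w \<in> W. fst w \<in> E}"
| "sem Tp (Neg x) = W - sem Tp x"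
| "sem Tp (Bel i p x) = {w \<in> W. Tp i w (sem Tp x) \<ge> p}"
| "sem Tp (Conj J f) = W \<inter> (\<Inter>j\<in>J. sem Tp (f j))"

primrec dp :: "('k::wellorder) expr \<Rightarrow> 'k option" where
  "dp (Atom E) = Some ozero"
| "dp (Neg x) = dp x"
| "dp (Bel i p x) = osucc_opt (dp x)"
| "dp (Conj J f) = osup ((\<lambda>j. dp (f j)) ` J)"

end

theory Submission
  imports Defs
begin

lemma no_max:
  assumes "Cinfinite (ordrel :: 'k::wellorder rel)"
  shows "\<exists>y. (x::'k) < y"
proof -
  have F: "Field (ordrel :: 'k rel) = UNIV"
    unfolding ordrel_def Field_def by auto
  have "\<exists>b \<in> Field (ordrel :: 'k rel). x \<noteq> b \<and> (x,b) \<in> ordrel"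
    apply (rule infinite_Card_order_limit)
    using assms F by (auto simp: cinfinite_def)
  then show ?thesis unfolding ordrel_def using le_neq_trans by blast
qed

lemma lt_osucc:
  assumes "Cinfinite (ordrel :: 'k::wellorder rel)"
  shows "(x::'k) < osucc x"
  unfolding osucc_def using no_max[OF assms, of x] by (metis LeastI)

lemma restr_mono:
  assumes "restr (Some a) v = restr (Some a) v'" "c \<le> a"
  shows "restr (Some c) v = restr (Some c) v'"
proof -
  have 1: "fst v = fst v'" and 2: "(\<lambda>i b. olt b (Some a) \<and> snd v i b) = (\<lambda>i b. olt b (Some a) \<and> snd v' i b)"
    using assms(1) unfolding restr_def by simp_all
  have 3: "snd v i b = snd v' i b" if "b < a" for i b
  proof -
    have "(olt b (Some a) \<and> snd v i b) = (olt b (Some a) \<and> snd v' i b)"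
      using 2 by (rule fun_cong[OF fun_cong])
    then show ?thesis using that by (simp add: olt_def)
  qed
  show ?thesis unfolding restr_def
  proof (rule prod_eqI)
    show "fst (fst v, \<lambda>i b. olt b (Some c) \<and> snd v i b) = fst (fst v', \<lambda>i b. olt b (Some c) \<and> snd v' i b)"
      using 1 by simp
    show "snd (fst v, \<lambda>i b. olt b (Some c) \<and> snd v i b) = snd (fst v', \<lambda>i b. olt b (Some c) \<and> snd v' i b)"
      using 3 assms(2) by (auto simp: olt_def intro!: ext)
  qed
qed

lemma ozero_le: "ozero \<le> (x::'k::wellorder)"
  unfolding ozero_def by (rule Least_le) simp

lemma restr_W_lvl:
  assumes "v \<in> W"
  shows "restr (Some b) v \<in> W_lvl b"
proof (cases "b = ozero")
  case True
  have "\<not> (x < b)" for x using True ozero_le[of x] by simp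
  then have "restr (Some b) v = (fst v, \<lambda>i x. False)" unfolding restr_def olt_def by simp
  then show ?thesis unfolding W_lvl_def using True by simp
next
  case False
  obtain c f where v: "v = (c, f)" by fastforce
  have r: "is_record None (f i)" for i using assms v unfolding W_def by auto
  have rec: "is_record (Some b) (\<lambda>x. x < b \<and> f i x)" for i
  proof -
    have z: "ozero \<le> b" by (rule ozero_le)
    have "eventually_zero_below (\<lambda>x. x < b \<and> f i x) (Some l)" if "is_limit l" for l
    proof -
      have "ole (Some l) None" by (simp add: ole_def)
      with r[of i] that have "eventually_zero_below (f i) (Some l)"
        unfolding is_record_def by blast
      then show ?thesis unfolding eventually_zero_below_def by blast
    qed
    moreover have "ole (Some ozero) (Some b)" using z by (simp add: ole_def)
    moreover have "\<forall>x. \<not> olt x (Some b) \<longrightarrow> \<not> (x < b \<and> f i x)" by (simp add: olt_def)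
    ultimately show ?thesis unfolding is_record_def using False by blast
  qed
  have "restr (Some b) v = (c, \<lambda>i x. x < b \<and> f i x)" unfolding restr_def olt_def v by simp
  then show ?thesis using False rec unfolding W_lvl_def by simp
qed

lemma osup_le:
  assumes "ole (osup S) (Some a)" "s \<in> S"
  shows "ole s (Some a)"
proof (cases "None \<in> S \<or> \<not> (\<exists>g. \<forall>s\<in>S. ole s (Some g))")
  case True
  then have "osup S = None" unfolding osup_def by simp
  with assms(1) show ?thesis by (simp add: ole_def)
next
  case False
  then have ex: "\<exists>g. \<forall>s\<in>S. ole s (Some g)" by blast
  define g where "g = (LEAST g. \<forall>s\<in>S. ole s (Some g))"
  have os: "osup S = Some g" unfolding osup_def g_def using False by simp
  have "\<forall>s\<in>S. ole s (Some g)" unfolding g_def using ex by (rule LeastI_ex)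
  then have 1: "ole s (Some g)" using assms(2) by blast
  have 2: "g \<le> a" using assms(1) os by (simp add: ole_def)
  show ?thesis using 1 2 unfolding ole_def by (cases s) auto
qed

lemma sem_W: "sem Tp \<phi> \<subseteq> W"
  by (induction \<phi>) auto

lemma main:
  assumes ci: "Cinfinite (ordrel :: 'k rel)" and ts: "type_space Tp"
  shows "\<And>a v v'. ole (dp \<phi>) (Some a) \<Longrightarrow> v \<in> W \<Longrightarrow> v' \<in> W \<Longrightarrow>
      restr (Some a) v = restr (Some a) v' \<Longrightarrow>
      (v \<in> sem Tp (\<phi>::'k::wellorder expr) \<longleftrightarrow> v' \<in> sem Tp \<phi>)"
proof (induction \<phi>)
  case (Atom E)
  have "fst (restr (Some a) v) = fst (restr (Some a) v')" using Atom.prems(4) by (rule arg_cong)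
  then have "fst v = fst v'" unfolding restr_def by simp
  then show ?case using Atom.prems(2,3) by simp
next
  case (Neg x)
  have "v \<in> sem Tp x \<longleftrightarrow> v' \<in> sem Tp x" using Neg.IH[OF Neg.prems(1)[unfolded dp.simps] Neg.prems(2,3,4)] .
  then show ?case using Neg.prems(2,3) by simp
next
  case (Bel i p x)
  obtain \<beta> where d: "dp x = Some \<beta>" using Bel.prems(1)
    by (cases "dp x") (simp_all add: osucc_opt_def ole_def)
  have "osucc \<beta> \<le> a" using Bel.prems(1) d by (simp add: osucc_opt_def ole_def)
  hence ba: "\<beta> < a" using lt_osucc[OF ci, of \<beta>] by auto
  define E where "E = restr (Some \<beta>) ` sem Tp x"
  have EW: "E \<subseteq> W_lvl \<beta>" unfolding E_def using sem_W restr_W_lvl by blast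
  have eq: "sem Tp x = preimg \<beta> E"
  proof
    show "sem Tp x \<subseteq> preimg \<beta> E" unfolding preimg_def E_def using sem_W by blast
  next
    show "preimg \<beta> E \<subseteq> sem Tp x"
    proof
      fix y assume "y \<in> preimg \<beta> E"
      then have y: "y \<in> W" and "restr (Some \<beta>) y \<in> restr (Some \<beta>) ` sem Tp x"
        unfolding preimg_def E_def by simp_all
      then obtain z where z: "z \<in> sem Tp x" "restr (Some \<beta>) y = restr (Some \<beta>) z"
        by (elim imageE) simp
      have "z \<in> W" using z sem_W by blast
      then show "y \<in> sem Tp x" using Bel.IH[of \<beta> y z] d y z by (simp add: ole_def)
    qed
  qed
  have "Tp i v' (preimg \<beta> E) = Tp i v (preimg \<beta> E)"
  proof -
    have H: "\<forall>b a E u. b < a \<and> E \<subseteq> W_lvl b \<and> u \<in> W \<and> restr (Some a) u = restr (Some a) v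
          \<longrightarrow> Tp i u (preimg b E) = Tp i v (preimg b E)"
      using ts[unfolded type_space_def, rule_format, OF Bel.prems(2), of i]
      by (elim conjE)
    show ?thesis using H[rule_format, of \<beta> a E v'] ba EW Bel.prems(3,4) by simp
  qed
  then show ?case using Bel.prems(2,3) by (simp add: eq)
next
  case (Conj J f)
  have "\<And>j. j \<in> J \<Longrightarrow> (v \<in> sem Tp (f j) \<longleftrightarrow> v' \<in> sem Tp (f j))"
  proof -
    fix j assume j: "j \<in> J"
    have "ole (dp (f j)) (Some a)"
      using osup_le[OF Conj.prems(1)[unfolded dp.simps] imageI[OF j]] .
    then show "v \<in> sem Tp (f j) \<longleftrightarrow> v' \<in> sem Tp (f j)"
      by (rule Conj.IH[OF rangeI _ Conj.prems(2,3,4)])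
  qed
  then have "v \<in> (\<Inter>j\<in>J. sem Tp (f j)) \<longleftrightarrow> v' \<in> (\<Inter>j\<in>J. sem Tp (f j))" by blast
  then show ?case using Conj.prems(2,3) by simp
qed

theorem lemma7:
  fixes Tp :: "player \<Rightarrow> ('k::wellorder) world \<Rightarrow> 'k world set \<Rightarrow> real"
    and a :: "'k option" and w u :: "'k world" and \<phi> :: "'k expr"
  assumes "card_order (ordrel :: 'k rel)" and "Cinfinite (ordrel :: 'k rel)"
    and "regularCard (ordrel :: 'k rel)"
    and "type_space Tp"
    and "w \<in> W" and "u \<in> W" and "restr a w = restr a u"
    and "wf_expr \<phi>" and "ole (dp \<phi>) a"
  shows "w \<in> sem Tp \<phi> \<longleftrightarrow> u \<in> sem Tp \<phi>"
proof (cases a)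
  case None
  have "restr None w = w" for w :: "'k world" unfolding restr_def olt_def by simp
  then have "w = u" using assms(7) None by metis
  then show ?thesis by simp
next
  case (Some a')
  show ?thesis using main[OF assms(2,4), of \<phi> a' w u] assms(5,6,7,9) Some by simp
qed

end
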